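(* Let $A\in\mathbb{R}^{nd\times nd}$ be symmetric with $d\times d$ blocks $A_{ij}$, $A_{ii}=I_d$, let $p>d$, and $f(S)=\sum_{i,j}\langle A_{ij},S_iS_j^{\top}\rangle$ on $\{S\in\mathbb{R}^{nd\times p}: S_iS_i^{\top}=I_d\ \forall i\}$. If $S$ is a local maximizer of $f$, then \[ \Lambda_{ii}:=\frac12\sum_{j=1}^n(S_iS_j^{\top}A_{ji}+A_{ij}S_jS_i^{\top})\succeq I_d\quad\text{for all }1\le i\le n. \]
   Context: $S_i$ is the $i$-th $d\times p$ block of $S$; $\langle X,Y\rangle=\mathrm{Tr}(XY^{\top})$; $\succeq$ is the Loewner order. *)

theory Defs
  imports "HOL-Analysis.Analysis"
begin

text \<open>An nd x q matrix is indexed by rows ('n \<times> 'd): block index i and in-block index a.\<close>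

definition blk :: "real^('n::finite \<times> 'd::finite)^('n \<times> 'd) \<Rightarrow> 'n \<Rightarrow> 'n \<Rightarrow> real^'d^'d" where
  "blk A i j = (\<chi> a b. A $ (i, a) $ (j, b))"

definition rowblk :: "real^'p::finite^('n::finite \<times> 'd::finite) \<Rightarrow> 'n \<Rightarrow> real^'p^'d" where
  "rowblk S i = (\<chi> a. S $ (i, a))"

definition frob_inner :: "real^'c::finite^'r::finite \<Rightarrow> real^'c^'r \<Rightarrow> real" where
  "frob_inner X Y = trace (X ** transpose Y)"

definition loewner_le :: "real^'d::finite^'d \<Rightarrow> real^'d^'d \<Rightarrow> bool" where
  "loewner_le X Y \<longleftrightarrow> transpose (Y - X) = Y - X \<and> (\<forall>x. 0 \<le> x \<bullet> ((Y - X) *v x))"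

definition stiefel_prod :: "(real^'p::finite^('n::finite \<times> 'd::finite)) set" where
  "stiefel_prod = {S. \<forall>i. rowblk S i ** transpose (rowblk S i) = mat 1}"

definition obj :: "real^('n::finite \<times> 'd::finite)^('n \<times> 'd) \<Rightarrow> real^'p::finite^('n::finite \<times> 'd::finite) \<Rightarrow> real" where
  "obj A S = (\<Sum>i\<in>UNIV. \<Sum>j\<in>UNIV. frob_inner (blk A i j) (rowblk S i ** transpose (rowblk S j)))"

definition local_max_on :: "('a::metric_space \<Rightarrow> real) \<Rightarrow> 'a set \<Rightarrow> 'a \<Rightarrow> bool" where
  "local_max_on f M x \<longleftrightarrow> x \<in> M \<and> (\<exists>e>0. \<forall>y\<in>M. dist y x < e \<longrightarrow> f y \<le> f x)"

definition Lambda_blk :: "real^('n::finite \<times> 'd::finite)^('n \<times> 'd) \<Rightarrow> real^'p::finite^('n::finite \<times> 'd::finite) \<Rightarrow> 'n \<Rightarrow> real^'d^'d" where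
  "Lambda_blk A S i = (1/2) *\<^sub>R (\<Sum>j\<in>UNIV.
      rowblk S i ** transpose (rowblk S j) ** blk A j i + blk A i j ** rowblk S j ** transpose (rowblk S i))"

end

theory Submission
  imports Defs
begin

lemma rr_entry: "(rowblk S i ** transpose (rowblk S j)) $ a $ b = S$(i,a) \<bullet> S$(j,b)"
  by (simp add: matrix_matrix_mult_def transpose_def rowblk_def inner_vec_def)

lemma stiefel_iff: "S \<in> stiefel_prod \<longleftrightarrow> (\<forall>i a b. S$(i,a) \<bullet> S$(i,b) = (if a = b then 1 else 0))"
  by (simp add: stiefel_prod_def vec_eq_iff rr_entry mat_def)

lemma frob_eq: "frob_inner X Y = (\<Sum>a\<in>UNIV. \<Sum>b\<in>UNIV. X$a$b * Y$a$b)"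
  by (simp add: frob_inner_def trace_def matrix_matrix_mult_def transpose_def)

lemma obj_eq: "obj A S = (\<Sum>i\<in>UNIV. \<Sum>j\<in>UNIV. \<Sum>a\<in>UNIV. \<Sum>b\<in>UNIV. A$(i,a)$(j,b) * (S$(i,a) \<bullet> S$(j,b)))"
  by (simp add: obj_def frob_eq rr_entry blk_def)

lemma Lam_entry: "Lambda_blk A S i $ a $ c = (1/2) * (\<Sum>j\<in>UNIV. \<Sum>b\<in>UNIV.
   (S$(i,a) \<bullet> S$(j,b)) * A$(j,b)$(i,c) + A$(i,a)$(j,b) * (S$(j,b) \<bullet> S$(i,c)))"
proof -
  have e1: "((rowblk S i ** transpose (rowblk S j)) ** blk A j i) $ a $ c = (\<Sum>b\<in>UNIV. (S$(i,a) \<bullet> S$(j,b)) * A$(j,b)$(i,c))" for j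
    by (simp add: matrix_matrix_mult_def[of "rowblk S i ** transpose (rowblk S j)"] rr_entry blk_def)
  have e2: "(blk A i j ** rowblk S j ** transpose (rowblk S i)) $ a $ c = (\<Sum>b\<in>UNIV. A$(i,a)$(j,b) * (S$(j,b) \<bullet> S$(i,c)))" for j
    unfolding matrix_mul_assoc[symmetric]
    by (simp add: matrix_matrix_mult_def[of _ "rowblk S j ** transpose (rowblk S i)"] rr_entry blk_def)
  show ?thesis unfolding Lambda_blk_def
    by (simp add: e1 e2 sum.distrib)
qed

lemma symA: "transpose A = A \<Longrightarrow> A$r$s = A$s$r"
  by (metis transpose_def vec_lambda_beta)


definition pert :: "real^'p::finite^('n::finite \<times> 'd::finite) \<Rightarrow> 'n \<Rightarrow> real^'d \<Rightarrow> real^'p \<Rightarrow> real^'p^('n \<times> 'd)" where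
  "pert S i y w = (\<chi> r. S$r + (if fst r = i then y$(snd r) *\<^sub>R w else 0))"

lemma pert_comp: "pert S i y w $ (k,a) = S$(k,a) + (if k = i then y$a *\<^sub>R w else 0)"
  by (simp add: pert_def)

lemma inner_pert: "pert S i y w $ (k,a) \<bullet> pert S i y w $ (l,b) =
   S$(k,a) \<bullet> S$(l,b) + (if k = i then y$a * (w \<bullet> S$(l,b)) else 0)
   + (if l = i then y$b * (S$(k,a) \<bullet> w) else 0)
   + (if k = i \<and> l = i then y$a * y$b * (w \<bullet> w) else 0)"
  by (simp add: pert_comp inner_add_left inner_add_right algebra_simps)

lemma mult_if0: "c * (if P then x else 0) = (if P then c * x else (0::real))"
  by simp
lemma if0_mult: "(if P then x else 0) * c = (if P then x * c else (0::real))"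
  by simp
lemma if_conj0: "(if P \<and> Q then x else 0) = (if P then (if Q then x else 0) else (0::real))"
  by simp
lemma if_sum0: "(\<Sum>x\<in>A. if P then f x else 0) = (if P then sum f A else 0)"
  by simp

lemma obj_pert:
  fixes A :: "real^('n::finite \<times> 'd::finite)^('n \<times> 'd)"
    and S :: "real^('p::finite)^('n \<times> 'd)"
  assumes sym: "transpose A = A" and id: "blk A i i = mat 1" and y: "y \<bullet> y = 1"
  shows "obj A (pert S i y w) = obj A S
     + 2 * (\<Sum>j\<in>UNIV. \<Sum>a\<in>UNIV. \<Sum>b\<in>UNIV. A$(i,a)$(j,b) * y$a * (w \<bullet> S$(j,b))) + w \<bullet> w"
proof -
  let ?T1 = "\<Sum>j\<in>UNIV. \<Sum>a\<in>UNIV. \<Sum>b\<in>UNIV. A$(i,a)$(j,b) * y$a * (w \<bullet> S$(j,b))"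
  have A_ii: "A$(i,a)$(i,b) = (if a = b then 1 else 0)" for a b
    using arg_cong[OF id, of "\<lambda>M. M$a$b"] by (simp add: blk_def mat_def)
  have t1: "(\<Sum>k\<in>UNIV. \<Sum>l\<in>UNIV. \<Sum>a\<in>UNIV. \<Sum>b\<in>UNIV. A$(k,a)$(l,b) * (if k = i then y$a * (w \<bullet> S$(l,b)) else 0)) = ?T1"
    by (simp add: mult_if0 if_sum0 mult.assoc cong: if_cong)
  have t2: "(\<Sum>k\<in>UNIV. \<Sum>l\<in>UNIV. \<Sum>a\<in>UNIV. \<Sum>b\<in>UNIV. A$(k,a)$(l,b) * (if l = i then y$b * (S$(k,a) \<bullet> w) else 0)) = ?T1"
  proof -
    have "(\<Sum>k\<in>UNIV. \<Sum>l\<in>UNIV. \<Sum>a\<in>UNIV. \<Sum>b\<in>UNIV. A$(k,a)$(l,b) * (if l = i then y$b * (S$(k,a) \<bullet> w) else 0))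
       = (\<Sum>k\<in>UNIV. \<Sum>a\<in>UNIV. \<Sum>b\<in>UNIV. A$(k,a)$(i,b) * (y$b * (S$(k,a) \<bullet> w)))"
      by (simp add: mult_if0 if_sum0 cong: if_cong)
    also have "\<dots> = ?T1"
      by (subst (2) sum.swap) (simp add: symA[OF sym, of "(_,_)" "(i,_)"] inner_commute mult_ac)
    finally show ?thesis .
  qed
  have t3: "(\<Sum>k\<in>UNIV. \<Sum>l\<in>UNIV. \<Sum>a\<in>UNIV. \<Sum>b\<in>UNIV. A$(k,a)$(l,b) * (if k = i \<and> l = i then y$a * y$b * (w \<bullet> w) else 0)) = w \<bullet> w"
  proof -
    have "(\<Sum>k\<in>UNIV. \<Sum>l\<in>UNIV. \<Sum>a\<in>UNIV. \<Sum>b\<in>UNIV. A$(k,a)$(l,b) * (if k = i \<and> l = i then y$a * y$b * (w \<bullet> w) else 0))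
      = (\<Sum>a\<in>UNIV. \<Sum>b\<in>UNIV. A$(i,a)$(i,b) * (y$a * y$b * (w \<bullet> w)))"
      by (simp add: mult_if0 if_sum0 if_conj0 cong: if_cong)
    also have "\<dots> = (\<Sum>a\<in>UNIV. y$a * y$a) * (w \<bullet> w)"
      by (simp add: A_ii if0_mult sum_distrib_right cong: if_cong)
    also have "\<dots> = w \<bullet> w" using y by (simp add: inner_vec_def)
    finally show ?thesis .
  qed
  show ?thesis
    unfolding obj_eq inner_pert
    by (simp add: distrib_left sum.distrib t1 t2 t3)
qed


definition lin :: "real^('n::finite \<times> 'd::finite)^('n \<times> 'd) \<Rightarrow> real^'p::finite^('n \<times> 'd) \<Rightarrow> 'n \<Rightarrow> real^'d \<Rightarrow> real^'p \<Rightarrow> real" where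
  "lin A S i y w = (\<Sum>j\<in>UNIV. \<Sum>a\<in>UNIV. \<Sum>b\<in>UNIV. A$(i,a)$(j,b) * y$a * (w \<bullet> S$(j,b)))"

lemma lin_comb: "lin A S i y (\<alpha> *\<^sub>R v + \<beta> *\<^sub>R u) = \<alpha> * lin A S i y v + \<beta> * lin A S i y u"
  by (simp add: lin_def inner_add_left sum.distrib sum_distrib_left algebra_simps)

lemma lin_neg: "lin A S i y (- u) = - lin A S i y u"
  by (simp add: lin_def sum_negf)

lemma sum_prod_UNIV: "(\<Sum>r\<in>UNIV. f r) = (\<Sum>k\<in>UNIV. \<Sum>a\<in>UNIV. f (k,a))"
  by (simp add: sum.cartesian_product UNIV_Times_UNIV[symmetric] del: UNIV_Times_UNIV)

lemma normif: "(norm (if P then x else 0))^2 = (if P then (norm x)^2 else (0::real))"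
  by simp

lemma norm_pert:
  fixes S :: "real^('p::finite)^('n::finite \<times> 'd::finite)"
  assumes y: "y \<bullet> y = 1"
  shows "norm (pert S i y w - S) = norm w"
proof -
  have "norm (pert S i y w - S) = sqrt (\<Sum>k\<in>UNIV. \<Sum>a\<in>UNIV. (norm ((pert S i y w - S) $ (k,a)))^2)"
    unfolding norm_vec_def[of "pert S i y w - S"] L2_set_def by (subst sum_prod_UNIV) (rule refl)
  also have "\<dots> = sqrt (\<Sum>a\<in>UNIV. (y$a)^2 * (norm w)^2)"
    by (simp add: pert_comp power_mult_distrib if_sum0 normif cong: if_cong)
  also have "\<dots> = sqrt ((norm w)^2)"
    using y by (simp add: sum_distrib_right[symmetric] inner_vec_def power2_eq_square)
  finally show ?thesis by simp
qed

lemma stiefel_pert: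
  fixes S :: "real^('p::finite)^('n::finite \<times> 'd::finite)"
  assumes St: "S \<in> stiefel_prod" and y: "y \<bullet> y = 1"
    and uo: "\<And>c. u \<bullet> S$(i,c) = 0" and uu: "u \<bullet> u = 1"
    and ab: "2 * \<alpha> + \<alpha>^2 + \<beta>^2 = 0"
    and v: "v = (\<Sum>c\<in>UNIV. y$c *\<^sub>R S$(i,c))"
  shows "pert S i y (\<alpha> *\<^sub>R v + \<beta> *\<^sub>R u) \<in> stiefel_prod"
proof -
  have SS: "S$(k,a) \<bullet> S$(k,b) = (if a = b then 1 else 0)" for k a b
    using St by (simp add: stiefel_iff)
  have vS: "v \<bullet> S$(i,b) = y$b" for b
    by (simp add: v inner_sum_left SS if_distrib[of "\<lambda>x. c * x" for c] cong: if_cong)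
  have uv: "u \<bullet> v = 0"
    by (simp add: v inner_sum_right uo)
  then have vu: "v \<bullet> u = 0" by (simp add: inner_commute)
  have vv: "v \<bullet> v = 1"
  proof -
    have "v \<bullet> v = (\<Sum>c\<in>UNIV. y$c * (S$(i,c) \<bullet> v))"
      by (simp add: v inner_sum_left)
    also have "\<dots> = (\<Sum>c\<in>UNIV. y$c * y$c)" by (simp add: inner_commute[of _ v] vS)
    also have "\<dots> = y \<bullet> y" by (simp add: inner_vec_def)
    finally show ?thesis using y by simp
  qed
  define w where "w = \<alpha> *\<^sub>R v + \<beta> *\<^sub>R u"
  have wS: "w \<bullet> S$(i,b) = \<alpha> * y$b" for b
    by (simp add: w_def inner_add_left vS uo)
  have ww: "w \<bullet> w = \<alpha>^2 + \<beta>^2"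
    by (simp add: w_def inner_add_left inner_add_right vu inner_commute[of u v] vv uu power2_eq_square)
  show ?thesis
    unfolding stiefel_iff w_def[symmetric]
  proof (intro allI)
    fix k a b
    show "pert S i y w $ (k, a) \<bullet> pert S i y w $ (k, b) = (if a = b then 1 else 0)"
    proof (cases "k = i")
      case True
      have "pert S i y w $ (k, a) \<bullet> pert S i y w $ (k, b) =
        (if a = b then 1 else 0) + y$a * y$b * (2 * \<alpha> + \<alpha>^2 + \<beta>^2)"
        unfolding inner_pert using True
        by (simp add: SS wS inner_commute[of "S$(i,a)"] ww algebra_simps)
      then show ?thesis using ab by simp
    qed (simp add: inner_pert SS)
  qed
qed


definition Gm :: "real^('n::finite \<times> 'd::finite)^('n \<times> 'd) \<Rightarrow> real^'p::finite^('n \<times> 'd) \<Rightarrow> 'n \<Rightarrow> 'd \<Rightarrow> 'd \<Rightarrow> real" where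
  "Gm A S i a c = (\<Sum>j\<in>UNIV. \<Sum>b\<in>UNIV. A$(i,a)$(j,b) * (S$(i,c) \<bullet> S$(j,b)))"

lemma Lam_G:
  assumes sym: "transpose A = A"
  shows "Lambda_blk A S i $ a $ c = (Gm A S i c a + Gm A S i a c) / 2"
proof -
  have "(\<Sum>j\<in>UNIV. \<Sum>b\<in>UNIV. (S$(i,a) \<bullet> S$(j,b)) * A$(j,b)$(i,c)) = Gm A S i c a"
    unfolding Gm_def
    by (intro sum.cong refl) (simp add: symA[OF sym, of "(_,_)" "(i,c)"] mult.commute)
  moreover have "(\<Sum>j\<in>UNIV. \<Sum>b\<in>UNIV. A$(i,a)$(j,b) * (S$(j,b) \<bullet> S$(i,c))) = Gm A S i a c"
    unfolding Gm_def
    by (intro sum.cong refl) (simp add: inner_commute)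
  ultimately show ?thesis by (simp add: Lam_entry sum.distrib)
qed

lemma swap4: "(\<Sum>a\<in>A. \<Sum>c\<in>C. \<Sum>j\<in>J. \<Sum>b\<in>B. F a c j b) = (\<Sum>j\<in>J. \<Sum>a\<in>A. \<Sum>b\<in>B. \<Sum>c\<in>C. F a c j b)"
proof -
  have "(\<Sum>c\<in>C. \<Sum>j\<in>J. \<Sum>b\<in>B. F a c j b) = (\<Sum>j\<in>J. \<Sum>b\<in>B. \<Sum>c\<in>C. F a c j b)" for a
  proof -
    have "(\<Sum>c\<in>C. \<Sum>j\<in>J. \<Sum>b\<in>B. F a c j b) = (\<Sum>j\<in>J. \<Sum>c\<in>C. \<Sum>b\<in>B. F a c j b)"
      by (rule sum.swap)
    also have "\<dots> = (\<Sum>j\<in>J. \<Sum>b\<in>B. \<Sum>c\<in>C. F a c j b)"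
      by (rule sum.cong[OF refl], rule sum.swap)
    finally show ?thesis .
  qed
  then have "(\<Sum>a\<in>A. \<Sum>c\<in>C. \<Sum>j\<in>J. \<Sum>b\<in>B. F a c j b) = (\<Sum>a\<in>A. \<Sum>j\<in>J. \<Sum>b\<in>B. \<Sum>c\<in>C. F a c j b)"
    by simp
  also have "\<dots> = (\<Sum>j\<in>J. \<Sum>a\<in>A. \<Sum>b\<in>B. \<Sum>c\<in>C. F a c j b)"
    by (rule sum.swap)
  finally show ?thesis .
qed

lemma lin_v: "lin A S i y (\<Sum>c\<in>UNIV. y$c *\<^sub>R S$(i,c)) = (\<Sum>a\<in>UNIV. \<Sum>c\<in>UNIV. y$a * y$c * Gm A S i a c)"
proof -
  have "(\<Sum>a\<in>UNIV. \<Sum>c\<in>UNIV. y$a * y$c * Gm A S i a c)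
     = (\<Sum>a\<in>UNIV. \<Sum>c\<in>UNIV. \<Sum>j\<in>UNIV. \<Sum>b\<in>UNIV. A$(i,a)$(j,b) * y$a * (y$c * (S$(i,c) \<bullet> S$(j,b))))"
    unfolding Gm_def sum_distrib_left by (intro sum.cong refl) (simp add: mult_ac)
  also have "\<dots> = lin A S i y (\<Sum>c\<in>UNIV. y$c *\<^sub>R S$(i,c))"
    unfolding lin_def by (subst swap4) (simp add: inner_sum_left sum_distrib_left)
  finally show ?thesis by simp
qed

lemma qf: "y \<bullet> (M *v y) = (\<Sum>a\<in>UNIV. \<Sum>c\<in>UNIV. y$a * y$c * (M$a$c :: real))"
  by (simp add: inner_vec_def matrix_vector_mult_def sum_distrib_left mult_ac)

lemma quad_eq:
  assumes sym: "transpose A = A"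
  shows "y \<bullet> (Lambda_blk A S i *v y) = lin A S i y (\<Sum>c\<in>UNIV. y$c *\<^sub>R S$(i,c))"
proof -
  have "y \<bullet> (Lambda_blk A S i *v y) = (\<Sum>a\<in>UNIV. \<Sum>c\<in>UNIV. y$a * y$c * ((Gm A S i c a + Gm A S i a c) / 2))"
    unfolding qf Lam_G[OF sym] ..
  also have "\<dots> = ((\<Sum>a\<in>UNIV. \<Sum>c\<in>UNIV. y$a * y$c * Gm A S i c a) + (\<Sum>a\<in>UNIV. \<Sum>c\<in>UNIV. y$a * y$c * Gm A S i a c)) / 2"
    by (simp add: sum.distrib sum_divide_distrib distrib_left add_divide_distrib)
  also have "(\<Sum>a\<in>UNIV. \<Sum>c\<in>UNIV. y$a * y$c * Gm A S i c a) = (\<Sum>a\<in>UNIV. \<Sum>c\<in>UNIV. y$a * y$c * Gm A S i a c)"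
    by (subst sum.swap) (simp add: mult_ac)
  finally show ?thesis by (simp add: lin_v)
qed

lemma Lam_sym:
  assumes sym: "transpose A = A"
  shows "transpose (Lambda_blk A S i - mat 1) = Lambda_blk A S i - mat 1"
  by (simp add: vec_eq_iff transpose_def Lam_G[OF sym] mat_def)


lemma w_inner:
  fixes S :: "real^('p::finite)^('n::finite \<times> 'd::finite)"
  assumes St: "S \<in> stiefel_prod" and y: "y \<bullet> y = 1"
    and uo: "\<And>c. u \<bullet> S$(i,c) = 0" and uu: "u \<bullet> u = 1"
    and v: "v = (\<Sum>c\<in>UNIV. y$c *\<^sub>R S$(i,c))"
  shows "(\<alpha> *\<^sub>R v + \<beta> *\<^sub>R u) \<bullet> (\<alpha> *\<^sub>R v + \<beta> *\<^sub>R u) = \<alpha>^2 + \<beta>^2"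
proof -
  have SS: "S$(k,a) \<bullet> S$(k,b) = (if a = b then 1 else 0)" for k a b
    using St by (simp add: stiefel_iff)
  have vS: "v \<bullet> S$(i,b) = y$b" for b
    by (simp add: v inner_sum_left SS if_distrib[of "\<lambda>x. c * x" for c] cong: if_cong)
  have uv: "u \<bullet> v = 0"
    by (simp add: v inner_sum_right uo)
  then have vu: "v \<bullet> u = 0" by (simp add: inner_commute)
  have vv: "v \<bullet> v = 1"
  proof -
    have "v \<bullet> v = (\<Sum>c\<in>UNIV. y$c * (S$(i,c) \<bullet> v))"
      by (simp add: v inner_sum_left)
    also have "\<dots> = (\<Sum>c\<in>UNIV. y$c * y$c)" by (simp add: inner_commute[of _ v] vS)
    also have "\<dots> = y \<bullet> y" by (simp add: inner_vec_def)
    finally show ?thesis using y by simp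
  qed
  show ?thesis
    by (simp add: inner_add_left inner_add_right vu uv vv uu power2_eq_square)
qed

lemma key:
  fixes A :: "real^('n::finite \<times> 'd::finite)^('n \<times> 'd)"
    and S :: "real^('p::finite)^('n \<times> 'd)"
  assumes sym: "transpose A = A"
    and id: "\<forall>i. blk A i i = mat 1"
    and card: "CARD('p) > CARD('d)"
    and lm: "local_max_on (obj A) stiefel_prod S"
    and y: "y \<bullet> y = 1"
  shows "1 \<le> lin A S i y (\<Sum>c\<in>UNIV. y$c *\<^sub>R S$(i,c))"
proof (rule ccontr)
  define v where "v = (\<Sum>c\<in>UNIV. y$c *\<^sub>R S$(i,c))"
  assume "\<not> 1 \<le> lin A S i y (\<Sum>c\<in>UNIV. y$c *\<^sub>R S$(i,c))"
  then have P: "lin A S i y v < 1" by (simp add: v_def)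
  from lm obtain e where e: "e > 0" and emax: "\<forall>T\<in>stiefel_prod. dist T S < e \<longrightarrow> obj A T \<le> obj A S"
    and St: "S \<in> stiefel_prod"
    unfolding local_max_on_def by blast
  let ?R = "range (\<lambda>c. S$(i,c))"
  have "dim ?R \<le> card ?R" by (rule dim_le_card') simp
  also have "\<dots> \<le> CARD('d)" by (rule card_image_le) simp
  also have "\<dots> < DIM(real^'p)" using card by simp
  finally obtain x0 where x0: "x0 \<noteq> 0" and x0o: "\<And>z. z \<in> span ?R \<Longrightarrow> orthogonal x0 z"
    using orthogonal_to_subspace_exists by blast
  define u1 where "u1 = x0 /\<^sub>R norm x0"
  have u1o: "u1 \<bullet> S$(i,c) = 0" for c
    using x0o[of "S$(i,c)"] by (simp add: u1_def orthogonal_def span_base)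
  have u1u: "u1 \<bullet> u1 = 1"
    using x0 by (simp add: u1_def inner_commute dot_square_norm power2_eq_square)
  obtain u where uo: "\<And>c. u \<bullet> S$(i,c) = 0" and uu: "u \<bullet> u = 1" and Q: "0 \<le> lin A S i y u"
  proof (cases "0 \<le> lin A S i y u1")
    case True then show ?thesis using that u1o u1u by blast
  next
    case False
    then show ?thesis using that[of "- u1"] u1o u1u by (simp add: lin_neg)
  qed
  define t where "t = e / 4"
  have t: "t > 0" using e by (simp add: t_def)
  define \<alpha> where "\<alpha> = - 2 * t^2 / (1 + t^2)"
  define \<beta> where "\<beta> = 2 * t / (1 + t^2)"
  have pos: "1 + t^2 > 0" by (simp add: add_pos_nonneg)
  have ab: "2 * \<alpha> + \<alpha>^2 + \<beta>^2 = 0"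
  proof -
    define D where "D = 1 + t^2"
    have D: "D > 0" by (simp add: D_def add_pos_nonneg)
    have "2 * (- 2 * t^2 / D) + (- 2 * t^2 / D)^2 + (2 * t / D)^2 = (- 4 * t^2 * D + 4 * (t^2 * t^2) + 4 * t^2) / D^2"
      using D by (simp add: power_divide field_simps power2_eq_square)
    also have "- 4 * t^2 * D + 4 * (t^2 * t^2) + 4 * t^2 = 0" by (simp add: D_def algebra_simps power2_eq_square)
    finally show ?thesis by (simp add: D_def \<alpha>_def \<beta>_def)
  qed
  have aneg: "\<alpha> < 0" using t pos by (simp add: \<alpha>_def)
  have bpos: "\<beta> > 0" using t pos by (simp add: \<beta>_def)
  define w where "w = \<alpha> *\<^sub>R v + \<beta> *\<^sub>R u"
  have Sw: "pert S i y w \<in> stiefel_prod"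
    unfolding w_def by (rule stiefel_pert[OF St y uo uu ab v_def])
  have ww: "w \<bullet> w = \<alpha>^2 + \<beta>^2"
    unfolding w_def by (rule w_inner[OF St y uo uu v_def])
  have "(norm w)^2 = \<alpha>^2 + \<beta>^2" using ww by (simp add: dot_square_norm)
  also have "\<dots> = - 2 * \<alpha>" using ab by linarith
  also have "\<dots> = 4 * t^2 / (1 + t^2)" by (simp add: \<alpha>_def)
  also have "\<dots> \<le> 4 * t^2"
    using pos t by (simp add: divide_le_eq mult_le_cancel_left1 add_pos_nonneg)
  also have "\<dots> = (2 * t)^2" by (simp add: power2_eq_square)
  finally have "norm w \<le> 2 * t"
    using t by (metis abs_le_square_iff abs_of_nonneg norm_ge_zero less_imp_le mult_nonneg_nonneg zero_le_numeral)
  then have "dist (pert S i y w) S < e"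
    using e by (simp add: dist_norm norm_pert[OF y] t_def)
  then have le: "obj A (pert S i y w) \<le> obj A S" using emax Sw by blast
  have "obj A (pert S i y w) = obj A S + 2 * lin A S i y w + w \<bullet> w"
    using obj_pert[OF sym id[rule_format] y, where S=S and w=w] by (simp add: lin_def)
  also have "lin A S i y w = \<alpha> * lin A S i y v + \<beta> * lin A S i y u"
    unfolding w_def by (rule lin_comb)
  finally have "2 * (\<alpha> * lin A S i y v + \<beta> * lin A S i y u) + (\<alpha>^2 + \<beta>^2) \<le> 0"
    using le ww by simp
  then have "\<alpha> * (lin A S i y v - 1) + \<beta> * lin A S i y u \<le> 0"
    using ab by (simp add: algebra_simps)
  moreover have "\<alpha> * (lin A S i y v - 1) > 0" using aneg P by (simp add: mult_neg_neg)
  moreover have "\<beta> * lin A S i y u \<ge> 0" using bpos Q by simp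
  ultimately show False by linarith
qed

theorem lemma3:
  fixes A :: "real^('n::finite \<times> 'd::finite)^('n \<times> 'd)"
    and S :: "real^('p::finite)^('n \<times> 'd)"
  assumes "transpose A = A"
    and "\<forall>i. blk A i i = mat 1"
    and "CARD('p) > CARD('d)"
    and "local_max_on (obj A) stiefel_prod S"
  shows "\<forall>i. loewner_le (mat 1) (Lambda_blk A S i)"
proof
  fix i
  let ?L = "Lambda_blk A S i"
  have q: "x \<bullet> x \<le> x \<bullet> (?L *v x)" for x
  proof (cases "x = 0")
    case True then show ?thesis by simp
  next
    case False
    define y where "y = (1 / norm x) *\<^sub>R x"
    have yy: "y \<bullet> y = 1" using False by (simp add: y_def dot_square_norm power2_eq_square)
    have "1 \<le> y \<bullet> (?L *v y)"
      using key[OF assms yy, of i] by (simp add: quad_eq[OF assms(1)])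
    also have "y \<bullet> (?L *v y) = (x \<bullet> (?L *v x)) / (norm x)^2"
      by (simp add: y_def matrix_vector_mult_scaleR power2_eq_square)
    finally have "(norm x)^2 \<le> x \<bullet> (?L *v x)" using False by (simp add: le_divide_eq)
    then show ?thesis by (simp add: dot_square_norm)
  qed
  show "loewner_le (mat 1) ?L"
    unfolding loewner_le_def
  proof
    show "transpose (?L - mat 1) = ?L - mat 1" by (rule Lam_sym[OF assms(1)])
    show "\<forall>x. 0 \<le> x \<bullet> ((?L - mat 1) *v x)"
      using q by (simp add: matrix_vector_mult_diff_rdistrib inner_diff_right)
  qed
qed

end
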